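(* Let $P=\{S_1,\ldots,S_n\}$ be a homothetic packing of $n$ squares with contact graph $G=([n],E)$. Then every clique of $G$ has at most $4$ vertices, and for every clique $\{i,j,k,\ell\}$ of size $4$ the squares $S_i,S_j,S_k,S_\ell$ share a corner.
   Context: Let $S=\{(x,y): -1\le x,y\le 1\}$. A homothetic packing of $n$ squares is a set $P=\{S_1,\ldots,S_n\}$ with $S_i=r_iS+p_i$, $r_i>0$, $p_i\in\mathbb{R}^2$, such that distinct squares have disjoint interiors. Its contact graph is $G=([n],E)$ where $\{i,j\}\in E$ iff $i\ne j$ and $S_i\cap S_j\ne\emptyset$. Four squares of the packing share a corner if they have a common point $z$ which is a corner (vertex) of each of the four squares (equivalently, they all meet at a single common point, each occupying one of the four quadrants around it). *)

theory Defs
  imports "HOL-Analysis.Analysis"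
begin

definition unit_square :: "(real \<times> real) set" where
  "unit_square = {(x, y). -1 \<le> x \<and> x \<le> 1 \<and> -1 \<le> y \<and> y \<le> 1}"

definition hsquare :: "real \<Rightarrow> real \<times> real \<Rightarrow> (real \<times> real) set" where
  "hsquare r p = (\<lambda>v. r *\<^sub>R v + p) ` unit_square"

definition homothetic_packing ::
  "nat \<Rightarrow> (nat \<Rightarrow> real) \<Rightarrow> (nat \<Rightarrow> real \<times> real) \<Rightarrow> bool" where
  "homothetic_packing n r p \<longleftrightarrow>
     (\<forall>i\<in>{1..n}. r i > 0) \<and>
     (\<forall>i\<in>{1..n}. \<forall>j\<in>{1..n}. i \<noteq> j \<longrightarrow>
        interior (hsquare (r i) (p i)) \<inter> interior (hsquare (r j) (p j)) = {})"

definition contact_edge ::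
  "nat \<Rightarrow> (nat \<Rightarrow> real) \<Rightarrow> (nat \<Rightarrow> real \<times> real) \<Rightarrow> nat \<Rightarrow> nat \<Rightarrow> bool" where
  "contact_edge n r p i j \<longleftrightarrow> i \<in> {1..n} \<and> j \<in> {1..n} \<and> i \<noteq> j \<and>
     hsquare (r i) (p i) \<inter> hsquare (r j) (p j) \<noteq> {}"

definition is_clique ::
  "nat \<Rightarrow> (nat \<Rightarrow> real) \<Rightarrow> (nat \<Rightarrow> real \<times> real) \<Rightarrow> nat set \<Rightarrow> bool" where
  "is_clique n r p C \<longleftrightarrow> C \<subseteq> {1..n} \<and>
     (\<forall>i\<in>C. \<forall>j\<in>C. i \<noteq> j \<longrightarrow> contact_edge n r p i j)"

definition corners :: "real \<Rightarrow> real \<times> real \<Rightarrow> (real \<times> real) set" where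
  "corners r p = {(fst p + s * r, snd p + t * r) | s t. s \<in> {-1, 1} \<and> t \<in> {-1, 1}}"

definition share_corner ::
  "(nat \<Rightarrow> real) \<Rightarrow> (nat \<Rightarrow> real \<times> real) \<Rightarrow> nat set \<Rightarrow> bool" where
  "share_corner r p C \<longleftrightarrow> (\<exists>z. \<forall>i\<in>C. z \<in> corners (r i) (p i))"

end

theory Submission imports Defs begin
lemma card4: "card (UNIV :: (bool\<times>bool) set) = 4"
  by (simp add: UNIV_Times_UNIV[symmetric] card_cartesian_product del: UNIV_Times_UNIV)
lemma hsq: assumes "r > 0" shows "hsquare r p = {fst p - r .. fst p + r} \<times> {snd p - r .. snd p + r}"
proof
  show "hsquare r p \<subseteq> {fst p - r .. fst p + r} \<times> {snd p - r .. snd p + r}"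
  proof
    fix z assume "z \<in> hsquare r p"
    then obtain a b where ab: "-1 \<le> a" "a \<le> 1" "-1 \<le> b" "b \<le> 1" and z: "z = r *\<^sub>R (a,b) + p"
      unfolding hsquare_def unit_square_def by auto
    have "r * a \<le> r" "- r \<le> r * a" "r * b \<le> r" "- r \<le> r * b"
      using ab assms mult_left_mono[of a 1 r] mult_left_mono[of "-1" a r]
        mult_left_mono[of b 1 r] mult_left_mono[of "-1" b r] by auto
    then show "z \<in> {fst p - r .. fst p + r} \<times> {snd p - r .. snd p + r}" using z by (cases p) auto
  qed
next
  show "{fst p - r .. fst p + r} \<times> {snd p - r .. snd p + r} \<subseteq> hsquare r p"
  proof
    fix z assume z: "z \<in> {fst p - r .. fst p + r} \<times> {snd p - r .. snd p + r}"
    obtain x y where xy: "z = (x,y)" by fastforce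
    let ?w = "((x - fst p)/r, (y - snd p)/r)"
    have "?w \<in> unit_square" using z assms xy by (auto simp: unit_square_def field_simps)
    moreover have "z = r *\<^sub>R ?w + p" using assms xy by (simp add: prod_eq_iff)
    ultimately show "z \<in> hsquare r p" unfolding hsquare_def by blast
  qed
qed
lemma int_hsq: assumes "r > 0" shows "interior (hsquare r p) = {fst p - r <..< fst p + r} \<times> {snd p - r <..< snd p + r}"
  using assms by (simp add: hsq interior_Times)
definition occ1 :: "bool \<Rightarrow> real \<Rightarrow> real \<Rightarrow> real \<Rightarrow> bool" where
  "occ1 s a b x = (if s then a \<le> x \<and> x < b else a < x \<and> x \<le> b)"

lemma occ1_meet:
  assumes "occ1 s a b x" "occ1 s a' b' x"
  shows "\<exists>t. a < t \<and> t < b \<and> a' < t \<and> t < b'"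
proof (cases s)
  case True
  then show ?thesis using assms by (intro exI[of _ "(x + min b b')/2"]) (auto simp: occ1_def)
next
  case False
  then show ?thesis using assms by (intro exI[of _ "(max a a' + x)/2"]) (auto simp: occ1_def)
qed

lemma occ1_ex: "a \<le> x \<Longrightarrow> x \<le> b \<Longrightarrow> a < b \<Longrightarrow> occ1 (x < b) a b x"
  by (auto simp: occ1_def)

lemma sum_ge1_eq:
  fixes f :: "'a \<Rightarrow> nat"
  assumes "finite C" "\<forall>i\<in>C. f i \<ge> 1" "sum f C \<le> card C" "i \<in> C"
  shows "f i = 1"
proof (rule ccontr)
  assume "f i \<noteq> 1"
  then have "f i \<ge> 2" using assms by force
  have "card (C - {i}) = sum (\<lambda>_. 1) (C - {i})" by simp
  also have "\<dots> \<le> sum f (C - {i})" using assms by (intro sum_mono) auto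
  finally have "sum f C \<ge> 2 + card (C - {i})"
    using sum.remove[OF assms(1) assms(4), of f] \<open>f i \<ge> 2\<close> by linarith
  moreover have "card (C - {i}) + 1 = card C" using assms
    by (metis card_Diff_singleton card_gt_0_iff Suc_diff_1 Suc_eq_plus1 empty_iff)
  ultimately show False using assms(3) by linarith
qed

theorem lemma9:
  fixes n :: nat and r :: "nat \<Rightarrow> real" and p :: "nat \<Rightarrow> real \<times> real"
  assumes "homothetic_packing n r p"
  shows "(\<forall>C. is_clique n r p C \<longrightarrow> card C \<le> 4) \<and>
         (\<forall>C. is_clique n r p C \<and> card C = 4 \<longrightarrow> share_corner r p C)"
proof -
  define a where "a i = fst (p i) - r i" for i
  define b where "b i = fst (p i) + r i" for i
  define c where "c i = snd (p i) - r i" for i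
  define d where "d i = snd (p i) + r i" for i
  have rpos: "\<And>i. i \<in> {1..n} \<Longrightarrow> r i > 0" using assms unfolding homothetic_packing_def by auto
  have disj: "\<And>i j. i \<in> {1..n} \<Longrightarrow> j \<in> {1..n} \<Longrightarrow> i \<noteq> j \<Longrightarrow>
      interior (hsquare (r i) (p i)) \<inter> interior (hsquare (r j) (p j)) = {}"
    using assms unfolding homothetic_packing_def by auto
  have main: "card C \<le> 4 \<and> (card C = 4 \<longrightarrow> share_corner r p C)" if cl: "is_clique n r p C" for C
  proof (cases "C = {}")
    case True then show ?thesis by simp
  next
    case False
    have Csub: "C \<subseteq> {1..n}" using cl unfolding is_clique_def by auto
    have fin: "finite C" using Csub finite_subset by blast
    have touch: "a j \<le> b i \<and> c j \<le> d i" if "i \<in> C" "j \<in> C" for i j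
    proof (cases "i = j")
      case True then show ?thesis using rpos[of i] Csub that by (auto simp: a_def b_def c_def d_def)
    next
      case False
      then have "contact_edge n r p i j" using cl that unfolding is_clique_def by auto
      then obtain z where "z \<in> hsquare (r i) (p i)" "z \<in> hsquare (r j) (p j)"
        unfolding contact_edge_def by auto
      moreover have "r i > 0" "r j > 0" using rpos Csub that by auto
      ultimately have "z \<in> {fst (p i) - r i .. fst (p i) + r i} \<times> {snd (p i) - r i .. snd (p i) + r i}"
         "z \<in> {fst (p j) - r j .. fst (p j) + r j} \<times> {snd (p j) - r j .. snd (p j) + r j}"
        using hsq[of "r i" "p i"] hsq[of "r j" "p j"] by auto
      then show ?thesis by (auto simp: a_def b_def c_def d_def mem_Times_iff)
    qed
    define x0 where "x0 = Max (a ` C)"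
    define y0 where "y0 = Max (c ` C)"
    have x0: "a i \<le> x0 \<and> x0 \<le> b i" if "i \<in> C" for i
      unfolding x0_def using fin False that touch by (auto intro: Max_ge Max.boundedI)
    have y0: "c i \<le> y0 \<and> y0 \<le> d i" if "i \<in> C" for i
      unfolding y0_def using fin False that touch by (auto intro: Max_ge Max.boundedI)
    define Q where "Q i = {q. occ1 (fst q) (a i) (b i) x0 \<and> occ1 (snd q) (c i) (d i) y0}" for i
    have Qne: "card (Q i) \<ge> 1" if "i \<in> C" for i
    proof -
      have "(x0 < b i, y0 < d i) \<in> Q i" unfolding Q_def
        using x0[OF that] y0[OF that] rpos[of i] Csub that
        by (auto intro!: occ1_ex simp: a_def b_def c_def d_def)
      then show ?thesis by (metis One_nat_def Suc_leI card_gt_0_iff empty_iff finite)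
    qed
    have Qdisj: "Q i \<inter> Q j = {}" if "i \<in> C" "j \<in> C" "i \<noteq> j" for i j
    proof (rule ccontr)
      assume "Q i \<inter> Q j \<noteq> {}"
      then obtain q where "q \<in> Q i" "q \<in> Q j" by blast
      then have "occ1 (fst q) (a i) (b i) x0" "occ1 (fst q) (a j) (b j) x0"
          "occ1 (snd q) (c i) (d i) y0" "occ1 (snd q) (c j) (d j) y0"
        unfolding Q_def by auto
      then obtain s t where "a i < s \<and> s < b i \<and> a j < s \<and> s < b j"
          "c i < t \<and> t < d i \<and> c j < t \<and> t < d j"
        using occ1_meet[of "fst q" "a i" "b i" x0 "a j" "b j"] occ1_meet[of "snd q" "c i" "d i" y0 "c j" "d j"]
        by blast
      then have "(s,t) \<in> interior (hsquare (r i) (p i)) \<inter> interior (hsquare (r j) (p j))"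
        using int_hsq[OF rpos[of i], of "p i"] int_hsq[OF rpos[of j], of "p j"] Csub that
        by (auto simp: a_def b_def c_def d_def)
      moreover have "i \<in> {1..n}" "j \<in> {1..n}" using Csub that by auto
      ultimately show False using disj[of i j] that by blast
    qed
    have eq: "card (\<Union>i\<in>C. Q i) = (\<Sum>i\<in>C. card (Q i))"
      using fin Qdisj by (intro card_UN_disjoint) auto
    have le4: "card (\<Union>i\<in>C. Q i) \<le> 4"
      using card_mono[of UNIV "\<Union>i\<in>C. Q i"] card4 by simp
    have geC: "card C \<le> (\<Sum>i\<in>C. card (Q i))"
      using sum_mono[of C "\<lambda>_. 1::nat" "\<lambda>i. card (Q i)"] Qne by simp
    have c4: "card C \<le> 4" using eq le4 geC by linarith
    moreover have "share_corner r p C" if "card C = 4"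
    proof -
      have one: "card (Q i) = 1" if "i \<in> C" for i
        using sum_ge1_eq[of C "\<lambda>i. card (Q i)" i] fin Qne \<open>card C = 4\<close> eq le4 \<open>i \<in> C\<close> by auto
      have "(x0, y0) \<in> corners (r i) (p i)" if iC: "i \<in> C" for i
      proof -
        have ri: "r i > 0" using rpos Csub iC by auto
        have xs: "x0 = a i \<or> x0 = b i"
        proof (rule ccontr)
          assume "\<not> ?thesis"
          then have "a i < x0" "x0 < b i" using x0[OF iC] by auto
          then have "(True, y0 < d i) \<in> Q i" "(False, y0 < d i) \<in> Q i" unfolding Q_def
            using y0[OF iC] ri by (auto intro!: occ1_ex simp: occ1_def c_def d_def)
          then have "card {(True, y0 < d i), (False, y0 < d i)} \<le> card (Q i)"
            by (intro card_mono) auto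
          then show False using one[OF iC] by simp
        qed
        have ys: "y0 = c i \<or> y0 = d i"
        proof (rule ccontr)
          assume "\<not> ?thesis"
          then have "c i < y0" "y0 < d i" using y0[OF iC] by auto
          then have "(x0 < b i, True) \<in> Q i" "(x0 < b i, False) \<in> Q i" unfolding Q_def
            using x0[OF iC] ri by (auto intro!: occ1_ex simp: occ1_def a_def b_def)
          then have "card {(x0 < b i, True), (x0 < b i, False)} \<le> card (Q i)"
            by (intro card_mono) auto
          then show False using one[OF iC] by simp
        qed
        obtain s where s: "s \<in> {-1, 1::real}" "x0 = fst (p i) + s * r i"
          using xs unfolding a_def b_def by (metis insertCI mult_minus_left mult_1 diff_conv_add_uminus)
        obtain t where t: "t \<in> {-1, 1::real}" "y0 = snd (p i) + t * r i"
          using ys unfolding c_def d_def by (metis insertCI mult_minus_left mult_1 diff_conv_add_uminus)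
        show ?thesis unfolding corners_def using s t by blast
      qed
      then show ?thesis unfolding share_corner_def by blast
    qed
    ultimately show ?thesis by blast
  qed
  show ?thesis using main by blast
qed
end
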